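(* Let $\mathscr M\subset ba(\mathcal A)$ and $\mathcal L(\mathscr M)=\{\nu\in ba(\mathcal A):\nu\ll m\text{ for some }m\in\mathbf A(\mathscr M)\}$. Then $\mathcal L(\mathscr M)=(\mathscr M^\perp)^\perp$, where for $\mathscr N\subset ba(\mathcal A)$, $\mathscr N^\perp=\{\nu\in ba(\mathcal A):\nu\perp\mu\text{ for all }\mu\in\mathscr N\}$.
   Context: $\Omega$ is a set, $\mathcal A$ an algebra of subsets of $\Omega$, $ba(\mathcal A)$ the Banach lattice of bounded finitely additive real set functions on $\mathcal A$ with norm $\|\mu\|=|\mu|(\Omega)$, $|\mu|$ the total variation. For $\lambda,\mu\in ba(\mathcal A)$: $\mu\ll\lambda$ means for every $\varepsilon>0$ there is $\delta>0$ with $|\lambda|(A)<\delta\Rightarrow|\mu|(A)<\varepsilon$; $\mu\perp\lambda$ means for every $\varepsilon>0$ there is $A\in\mathcal A$ with $|\mu|(A)+|\lambda|(A^c)<\varepsilon$. $\mathbf A(\mathscr M)=\{\sum_n\alpha_n\frac{|\mu_n|}{1\vee\|\mu_n\|}:\mu_n\in\mathscr M,\ \alpha_n\ge0,\ \sum_n\alpha_n=1\}$. *)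

theory Defs
  imports "HOL-Analysis.Analysis"
begin

text \<open>Set functions are total functions on 'a set; members of ba are required to vanish
  outside the algebra, so that ba is a faithful copy of the space of bounded finitely
  additive set functions on the algebra.\<close>

definition ba :: "'a set \<Rightarrow> 'a set set \<Rightarrow> ('a set \<Rightarrow> real) set" where
  "ba \<Omega> \<A> = {\<mu>.
     (\<forall>A\<in>\<A>. \<forall>B\<in>\<A>. A \<inter> B = {} \<longrightarrow> \<mu> (A \<union> B) = \<mu> A + \<mu> B)
   \<and> (\<exists>c. \<forall>A\<in>\<A>. \<bar>\<mu> A\<bar> \<le> c)
   \<and> (\<forall>A. A \<notin> \<A> \<longrightarrow> \<mu> A = 0)}"

definition tv :: "'a set set \<Rightarrow> ('a set \<Rightarrow> real) \<Rightarrow> 'a set \<Rightarrow> real" where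
  "tv \<A> \<mu> A = (if A \<in> \<A> then
     (SUP P \<in> {P. finite P \<and> P \<subseteq> \<A> \<and> disjoint P \<and> \<Union>P = A}. \<Sum>B\<in>P. \<bar>\<mu> B\<bar>)
   else 0)"

definition ba_norm :: "'a set \<Rightarrow> 'a set set \<Rightarrow> ('a set \<Rightarrow> real) \<Rightarrow> real" where
  "ba_norm \<Omega> \<A> \<mu> = tv \<A> \<mu> \<Omega>"

definition abs_cont :: "'a set set \<Rightarrow> ('a set \<Rightarrow> real) \<Rightarrow> ('a set \<Rightarrow> real) \<Rightarrow> bool" where
  "abs_cont \<A> \<mu> lam \<longleftrightarrow>
     (\<forall>\<epsilon>>0. \<exists>\<delta>>0. \<forall>A\<in>\<A>. tv \<A> lam A < \<delta> \<longrightarrow> tv \<A> \<mu> A < \<epsilon>)"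

definition singular :: "'a set \<Rightarrow> 'a set set \<Rightarrow> ('a set \<Rightarrow> real) \<Rightarrow> ('a set \<Rightarrow> real) \<Rightarrow> bool" where
  "singular \<Omega> \<A> \<mu> lam \<longleftrightarrow>
     (\<forall>\<epsilon>>0. \<exists>A\<in>\<A>. tv \<A> \<mu> A + tv \<A> lam (\<Omega> - A) < \<epsilon>)"

definition convA :: "'a set \<Rightarrow> 'a set set \<Rightarrow> ('a set \<Rightarrow> real) set \<Rightarrow> ('a set \<Rightarrow> real) set" where
  "convA \<Omega> \<A> M = {m. \<exists>(\<mu>::nat \<Rightarrow> 'a set \<Rightarrow> real) (\<alpha>::nat \<Rightarrow> real).
     (\<forall>n. \<mu> n \<in> M) \<and> (\<forall>n. \<alpha> n \<ge> 0) \<and> \<alpha> sums 1 \<and>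
     m = (\<lambda>A. \<Sum>n. \<alpha> n * (tv \<A> (\<mu> n) A / max 1 (ba_norm \<Omega> \<A> (\<mu> n))))}"

definition Lset :: "'a set \<Rightarrow> 'a set set \<Rightarrow> ('a set \<Rightarrow> real) set \<Rightarrow> ('a set \<Rightarrow> real) set" where
  "Lset \<Omega> \<A> M = {\<nu> \<in> ba \<Omega> \<A>. \<exists>m\<in>convA \<Omega> \<A> M. abs_cont \<A> \<nu> m}"

definition perp :: "'a set \<Rightarrow> 'a set set \<Rightarrow> ('a set \<Rightarrow> real) set \<Rightarrow> ('a set \<Rightarrow> real) set" where
  "perp \<Omega> \<A> N = {\<nu> \<in> ba \<Omega> \<A>. \<forall>\<mu>\<in>N. singular \<Omega> \<A> \<nu> \<mu>}"

end

theory Submission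
  imports Defs
begin

definition add_on :: "'a set set \<Rightarrow> ('a set \<Rightarrow> real) \<Rightarrow> bool" where
  "add_on M \<mu> \<longleftrightarrow> (\<forall>A\<in>M. \<forall>B\<in>M. A \<inter> B = {} \<longrightarrow> \<mu> (A \<union> B) = \<mu> A + \<mu> B)"

definition bnd_on :: "'a set set \<Rightarrow> ('a set \<Rightarrow> real) \<Rightarrow> bool" where
  "bnd_on M \<mu> \<longleftrightarrow> (\<exists>c. \<forall>A\<in>M. \<bar>\<mu> A\<bar> \<le> c)"

definition pv :: "'a set set \<Rightarrow> ('a set \<Rightarrow> real) \<Rightarrow> 'a set \<Rightarrow> real" where
  "pv M \<mu> A = (SUP B\<in>{B\<in>M. B \<subseteq> A}. \<mu> B)"

definition Parts :: "'a set set \<Rightarrow> 'a set \<Rightarrow> 'a set set set" where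
  "Parts M A = {P. finite P \<and> P \<subseteq> M \<and> disjoint P \<and> \<Union>P = A}"

definition gn :: "'a set \<Rightarrow> 'a set set \<Rightarrow> ('a set \<Rightarrow> real) \<Rightarrow> 'a set \<Rightarrow> real" where
  "gn \<Omega>' M' \<mu> = (\<lambda>A. tv M' \<mu> A / max 1 (ba_norm \<Omega>' M' \<mu>))"

lemma convA_iff: "m \<in> convA \<Omega>' M' MM \<longleftrightarrow> (\<exists>\<mu> \<alpha>. (\<forall>n. \<mu> n \<in> MM) \<and> (\<forall>n. \<alpha> n \<ge> 0) \<and> \<alpha> sums 1 \<and>
     m = (\<lambda>A. \<Sum>n. \<alpha> n * gn \<Omega>' M' (\<mu> n) A))"
  unfolding convA_def gn_def by simp

definition sing_to :: "'a set \<Rightarrow> 'a set set \<Rightarrow> ('a set \<Rightarrow> real) \<Rightarrow> ('a set \<Rightarrow> real) \<Rightarrow> bool" where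
  "sing_to \<Omega>' M' l f \<longleftrightarrow> (\<forall>\<epsilon>>0. \<exists>A\<in>M'. tv M' l A + f (\<Omega>' - A) < \<epsilon>)"

definition phi :: "'a set set \<Rightarrow> ('a set \<Rightarrow> real) \<Rightarrow> ('a set \<Rightarrow> real) \<Rightarrow> real \<Rightarrow> 'a set \<Rightarrow> real" where
  "phi M' v m d A = (SUP B\<in>{B\<in>M'. B \<subseteq> A \<and> m B < d}. v B)"

definition rho :: "'a set set \<Rightarrow> ('a set \<Rightarrow> real) \<Rightarrow> ('a set \<Rightarrow> real) \<Rightarrow> 'a set \<Rightarrow> real" where
  "rho M' v m A = (if A \<in> M' then (INF d\<in>{0<..}. phi M' v m d A) else 0)"

lemma choice2: "\<forall>k. \<exists>a b. P k a b \<Longrightarrow> \<exists>f g. \<forall>k. P k (f k) (g k)"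
proof -
  assume "\<forall>k. \<exists>a b. P k a b"
  then have "\<forall>k. \<exists>p. P k (fst p) (snd p)" by auto
  from choice[OF this] obtain h where "\<forall>k. P k (fst (h k)) (snd (h k))" by blast
  then show ?thesis by (intro exI[of _ "\<lambda>k. fst (h k)"] exI[of _ "\<lambda>k. snd (h k)"]) simp
qed

lemma double_sums:
  fixes f :: "nat \<times> nat \<Rightarrow> real"
  assumes nn: "\<And>x. 0 \<le> f x" and r: "\<And>k. (\<lambda>n. f (k, n)) sums a k" and a: "a sums t"
  shows "(\<lambda>j. f (prod_decode j)) sums t"
proof -
  have r': "((\<lambda>n. f (k, n)) has_sum a k) UNIV" for k
    by (rule sums_nonneg_imp_has_sum[OF r]) (simp add: nn)
  have an: "0 \<le> a k" for k
  proof -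
    have "summable (\<lambda>n. f (k, n))" "a k = (\<Sum>n. f (k, n))" using r[of k] by (simp_all add: sums_iff)
    then show ?thesis by (simp add: suminf_nonneg nn)
  qed
  have a': "(a has_sum t) UNIV" by (rule sums_nonneg_imp_has_sum[OF a an])
  have sm: "f summable_on Sigma UNIV (\<lambda>_. UNIV)"
    by (rule summable_on_SigmaI[OF r' has_sum_imp_summable[OF a'] nn])
  have "(f has_sum t) (Sigma UNIV (\<lambda>_. UNIV))"
    by (rule has_sum_SigmaI[OF r' a' sm])
  then have "(f has_sum t) UNIV" by simp
  then have "((\<lambda>j. f (prod_decode j)) has_sum t) UNIV"
    using has_sum_reindex_bij_betw[of prod_decode UNIV UNIV f t] bij_prod_decode by simp
  then show ?thesis by (rule has_sum_imp_sums)
qed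

locale rctx = algebra +
  fixes v m :: "'a set \<Rightarrow> real"
  assumes va: "add_on M v" and vb: "bnd_on M v" and vp: "\<And>A. 0 \<le> v A"
    and ma: "add_on M m" and mp: "\<And>A. 0 \<le> m A"

context algebra
begin

lemma add_emptyD: "add_on M \<mu> \<Longrightarrow> \<mu> {} = 0"
  unfolding add_on_def by (drule bspec[of _ _ "{}"], auto)

lemma addD: "add_on M \<mu> \<Longrightarrow> A \<in> M \<Longrightarrow> B \<in> M \<Longrightarrow> A \<inter> B = {} \<Longrightarrow> \<mu> (A \<union> B) = \<mu> A + \<mu> B"
  unfolding add_on_def by blast

lemma add_diff: "add_on M \<mu> \<Longrightarrow> A \<in> M \<Longrightarrow> B \<in> M \<Longrightarrow> B \<subseteq> A \<Longrightarrow> \<mu> A = \<mu> B + \<mu> (A - B)"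
  using addD[of \<mu> B "A - B"] by (simp add: Diff Un_absorb1 Int_Diff)

lemma fin_add:
  assumes "add_on M \<mu>" "finite P" "P \<subseteq> M" "disjoint P"
  shows "\<mu> (\<Union>P) = (\<Sum>p\<in>P. \<mu> p)"
  using assms(2,3,4)
proof (induction P rule: finite_induct)
  case empty
  then show ?case using add_emptyD[OF assms(1)] by simp
next
  case (insert p F)
  have d: "disjoint F" using insert.prems(2) by (simp add: pairwise_insert)
  have "p \<inter> \<Union>F = {}" using insert.prems(2) insert.hyps(2)
    by (auto simp: pairwise_insert disjnt_def)
  moreover have "\<Union>F \<in> M" using insert by auto
  ultimately have "\<mu> (\<Union>(insert p F)) = \<mu> p + \<mu> (\<Union>F)"
    using addD[OF assms(1), of p "\<Union>F"] insert.prems by auto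
  then show ?case using insert d by simp
qed

lemma bnd_bdd: "bnd_on M \<mu> \<Longrightarrow> bdd_above (\<mu> ` {B\<in>M. B \<subseteq> A})"
  unfolding bnd_on_def bdd_above_def by (auto dest: abs_le_D1)

lemma pv_upper: "bnd_on M \<mu> \<Longrightarrow> B \<in> M \<Longrightarrow> B \<subseteq> A \<Longrightarrow> \<mu> B \<le> pv M \<mu> A"
  unfolding pv_def by (rule cSUP_upper[OF _ bnd_bdd]) auto

lemma pv_least: "(\<And>B. B \<in> M \<Longrightarrow> B \<subseteq> A \<Longrightarrow> \<mu> B \<le> c) \<Longrightarrow> pv M \<mu> A \<le> c"
  unfolding pv_def by (rule cSUP_least) auto

lemma pv_add:
  assumes a: "add_on M \<mu>" and b: "bnd_on M \<mu>" and A: "A1 \<in> M" "A2 \<in> M" "A1 \<inter> A2 = {}"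
  shows "pv M \<mu> (A1 \<union> A2) = pv M \<mu> A1 + pv M \<mu> A2"
proof (rule antisym)
  show "pv M \<mu> (A1 \<union> A2) \<le> pv M \<mu> A1 + pv M \<mu> A2"
  proof (rule pv_least)
    fix B assume B: "B \<in> M" "B \<subseteq> A1 \<union> A2"
    have "B = (B \<inter> A1) \<union> (B \<inter> A2)" using B by auto
    then have "\<mu> B = \<mu> (B \<inter> A1) + \<mu> (B \<inter> A2)"
      using addD[OF a, of "B \<inter> A1" "B \<inter> A2"] A B by auto
    also have "\<dots> \<le> pv M \<mu> A1 + pv M \<mu> A2"
      by (intro add_mono pv_upper[OF b]) (use A B in auto)
    finally show "\<mu> B \<le> pv M \<mu> A1 + pv M \<mu> A2" .
  qed
next
  have "pv M \<mu> A1 \<le> pv M \<mu> (A1 \<union> A2) - pv M \<mu> A2"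
  proof (rule pv_least)
    fix B1 assume B1: "B1 \<in> M" "B1 \<subseteq> A1"
    have "pv M \<mu> A2 \<le> pv M \<mu> (A1 \<union> A2) - \<mu> B1"
    proof (rule pv_least)
      fix B2 assume B2: "B2 \<in> M" "B2 \<subseteq> A2"
      have "\<mu> (B1 \<union> B2) = \<mu> B1 + \<mu> B2"
        using addD[OF a, of B1 B2] A B1 B2 by auto
      moreover have "\<mu> (B1 \<union> B2) \<le> pv M \<mu> (A1 \<union> A2)"
        by (rule pv_upper[OF b]) (use B1 B2 in auto)
      ultimately show "\<mu> B2 \<le> pv M \<mu> (A1 \<union> A2) - \<mu> B1" by simp
    qed
    then show "\<mu> B1 \<le> pv M \<mu> (A1 \<union> A2) - pv M \<mu> A2" by simp
  qed
  then show "pv M \<mu> A1 + pv M \<mu> A2 \<le> pv M \<mu> (A1 \<union> A2)" by simp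
qed


lemma part_bound:
  assumes a: "add_on M \<mu>" and b: "bnd_on M \<mu>" and A: "A \<in> M" and P: "P \<in> Parts M A"
  shows "(\<Sum>p\<in>P. \<bar>\<mu> p\<bar>) \<le> 2 * pv M \<mu> A - \<mu> A"
proof -
  define P1 where "P1 = {p\<in>P. \<mu> p \<ge> 0}"
  define P2 where "P2 = {p\<in>P. \<not> \<mu> p \<ge> 0}"
  have fP: "finite P" "P \<subseteq> M" "disjoint P" "\<Union>P = A" using P by (auto simp: Parts_def)
  have PU: "P = P1 \<union> P2" "P1 \<inter> P2 = {}" by (auto simp: P1_def P2_def)
  have f12: "finite P1" "finite P2" using fP(1) by (auto simp: P1_def P2_def)
  have "(\<Sum>p\<in>P. \<bar>\<mu> p\<bar>) = (\<Sum>p\<in>P1. \<bar>\<mu> p\<bar>) + (\<Sum>p\<in>P2. \<bar>\<mu> p\<bar>)"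
    using PU f12 by (metis sum.union_disjoint)
  also have "(\<Sum>p\<in>P1. \<bar>\<mu> p\<bar>) = (\<Sum>p\<in>P1. \<mu> p)"
    by (rule sum.cong) (auto simp: P1_def)
  also have "(\<Sum>p\<in>P2. \<bar>\<mu> p\<bar>) = - (\<Sum>p\<in>P2. \<mu> p)"
    by (subst sum_negf[symmetric], rule sum.cong) (auto simp: P2_def)
  also have "(\<Sum>p\<in>P1. \<mu> p) = \<mu> (\<Union>P1)"
    by (rule fin_add[OF a, symmetric]) (use fP f12 in \<open>auto simp: P1_def intro: pairwise_subset\<close>)
  also have "(\<Sum>p\<in>P2. \<mu> p) = \<mu> (\<Union>P2)"
    by (rule fin_add[OF a, symmetric]) (use fP f12 in \<open>auto simp: P2_def intro: pairwise_subset\<close>)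
  finally have eq: "(\<Sum>p\<in>P. \<bar>\<mu> p\<bar>) = \<mu> (\<Union>P1) - \<mu> (\<Union>P2)" by simp
  have M12: "\<Union>P1 \<in> M" "\<Union>P2 \<in> M" using fP f12 by (auto simp: P1_def P2_def)
  have disj: "\<Union>P1 \<inter> \<Union>P2 = {}"
  proof -
    { fix x p q assume "x \<in> p" "x \<in> q" "p \<in> P1" "q \<in> P2"
      then have "p \<noteq> q" "p \<in> P" "q \<in> P" by (auto simp: P1_def P2_def)
      with fP(3) have "p \<inter> q = {}" by (auto simp: pairwise_def disjnt_def)
      with \<open>x \<in> p\<close> \<open>x \<in> q\<close> have False by auto }
    then show ?thesis by blast
  qed
  have "\<mu> A = \<mu> (\<Union>P1) + \<mu> (\<Union>P2)"
    using addD[OF a M12 disj] fP(4) PU(1) by (metis Union_Un_distrib)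
  moreover have "\<mu> (\<Union>P1) \<le> pv M \<mu> A"
    by (rule pv_upper[OF b M12(1)]) (use fP PU in auto)
  ultimately show ?thesis using eq by simp
qed

lemma tv_eq:
  assumes a: "add_on M \<mu>" and b: "bnd_on M \<mu>" and A: "A \<in> M"
  shows "tv M \<mu> A = 2 * pv M \<mu> A - \<mu> A"
proof -
  have tvd: "tv M \<mu> A = (SUP P\<in>Parts M A. \<Sum>B\<in>P. \<bar>\<mu> B\<bar>)"
    using A by (simp add: tv_def Parts_def)
  have ne: "Parts M A \<noteq> {}"
    using A by (auto simp: Parts_def intro!: exI[of _ "{A}"])
  have bdd: "bdd_above ((\<lambda>P. \<Sum>B\<in>P. \<bar>\<mu> B\<bar>) ` Parts M A)"
    using part_bound[OF a b A] by (auto simp: bdd_above_def)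
  have le: "tv M \<mu> A \<le> 2 * pv M \<mu> A - \<mu> A"
    unfolding tvd by (rule cSUP_least[OF ne]) (use part_bound[OF a b A] in auto)
  have "pv M \<mu> A \<le> (tv M \<mu> A + \<mu> A) / 2"
  proof (rule pv_least)
    fix B assume B: "B \<in> M" "B \<subseteq> A"
    have "2 * \<mu> B - \<mu> A \<le> tv M \<mu> A"
    proof (cases "B = A - B")
      case True
      then have "B = {}" "A = {}" by auto
      then have "2 * \<mu> B - \<mu> A = 0" using add_emptyD[OF a] by simp
      also have "0 \<le> (\<Sum>C\<in>{A}. \<bar>\<mu> C\<bar>)" by simp
      also have "\<dots> \<le> tv M \<mu> A" unfolding tvd
        by (rule cSUP_upper[OF _ bdd]) (use A in \<open>auto simp: Parts_def\<close>)
      finally show ?thesis .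
    next
      case False
      have mA: "\<mu> A = \<mu> B + \<mu> (A - B)" using add_diff[OF a A B(1) B(2)] .
      have "2 * \<mu> B - \<mu> A \<le> (\<Sum>C\<in>{B, A - B}. \<bar>\<mu> C\<bar>)"
        using False mA by simp
      also have "\<dots> \<le> tv M \<mu> A" unfolding tvd
        by (rule cSUP_upper[OF _ bdd]) (use A B False in \<open>auto simp: Parts_def pairwise_insert disjnt_def\<close>)
      finally show ?thesis .
    qed
    then show "\<mu> B \<le> (tv M \<mu> A + \<mu> A) / 2" by simp
  qed
  with le show ?thesis by simp
qed

lemma mono_pos:
  assumes a: "add_on M f" and p: "\<And>A. A \<in> M \<Longrightarrow> 0 \<le> f A" and AB: "A \<in> M" "B \<in> M" "B \<subseteq> A"
  shows "f B \<le> f A"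
  using add_diff[OF a AB] p[of "A - B"] AB by auto

lemma pv_nonneg: "add_on M \<mu> \<Longrightarrow> bnd_on M \<mu> \<Longrightarrow> 0 \<le> pv M \<mu> A"
  using pv_upper[of \<mu> "{}" A] add_emptyD[of \<mu>] by auto

lemma tv_eq_out: "A \<notin> M \<Longrightarrow> tv M \<mu> A = 0"
  by (simp add: tv_def)

context
  fixes \<mu> assumes a: "add_on M \<mu>" and b: "bnd_on M \<mu>"
begin

lemma tv_abs: "A \<in> M \<Longrightarrow> \<bar>\<mu> A\<bar> \<le> tv M \<mu> A"
  using tv_eq[OF a b, of A] pv_upper[OF b, of A A] pv_nonneg[OF a b, of A] by auto

lemma tv_nonneg: "0 \<le> tv M \<mu> A"
  using tv_abs[of A] tv_eq_out[of A \<mu>] by (cases "A \<in> M") auto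

lemma tv_add: "add_on M (tv M \<mu>)"
  unfolding add_on_def
proof (intro ballI impI)
  fix A B assume AB: "A \<in> M" "B \<in> M" "A \<inter> B = {}"
  then show "tv M \<mu> (A \<union> B) = tv M \<mu> A + tv M \<mu> B"
    using tv_eq[OF a b, of "A \<union> B"] tv_eq[OF a b, of A] tv_eq[OF a b, of B] pv_add[OF a b AB] addD[OF a AB] AB Un by simp
qed

lemma tv_bnd: "bnd_on M (tv M \<mu>)"
proof -
  obtain c where c: "\<And>A. A \<in> M \<Longrightarrow> \<bar>\<mu> A\<bar> \<le> c" using b unfolding bnd_on_def by blast
  have "\<bar>tv M \<mu> A\<bar> \<le> 3 * c" if "A \<in> M" for A
  proof -
    have "pv M \<mu> A \<le> c" by (rule pv_least) (use c in \<open>auto dest: abs_le_D1\<close>)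
    then show ?thesis using tv_eq[OF a b that] c[OF that] tv_nonneg[of A] by auto
  qed
  then show ?thesis unfolding bnd_on_def by blast
qed

lemma tv_empty: "tv M \<mu> {} = 0"
  using add_emptyD[OF tv_add] .

lemma tv_mono: "A \<in> M \<Longrightarrow> B \<in> M \<Longrightarrow> B \<subseteq> A \<Longrightarrow> tv M \<mu> B \<le> tv M \<mu> A"
  by (rule mono_pos[OF tv_add]) (auto simp: tv_nonneg)

lemma tv_le_top: "tv M \<mu> A \<le> tv M \<mu> \<Omega>"
  using tv_mono[of \<Omega> A] sets_into_space tv_eq_out[of A \<mu>] tv_nonneg[of \<Omega>]
  by (cases "A \<in> M") auto

lemma tv_sub: "A \<in> M \<Longrightarrow> B \<in> M \<Longrightarrow> tv M \<mu> (A \<union> B) \<le> tv M \<mu> A + tv M \<mu> B"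
proof -
  assume AB: "A \<in> M" "B \<in> M"
  have "tv M \<mu> (A \<union> B) = tv M \<mu> (A \<union> (B - A))" by (simp add: Un_Diff_cancel)
  also have "\<dots> = tv M \<mu> A + tv M \<mu> (B - A)" using addD[OF tv_add, of A "B - A"] AB by auto
  also have "\<dots> \<le> tv M \<mu> A + tv M \<mu> B" using tv_mono[of B "B - A"] AB by auto
  finally show ?thesis .
qed

end

lemma tv_pos:
  assumes a: "add_on M f" and b: "bnd_on M f" and p: "\<And>A. A \<in> M \<Longrightarrow> 0 \<le> f A" and A: "A \<in> M"
  shows "tv M f A = f A"
proof -
  have "pv M f A = f A"
    using pv_least[of A f "f A"] mono_pos[OF a p A] pv_upper[OF b A, of A] by (auto intro: antisym)
  then show ?thesis using tv_eq[OF a b A] by simp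
qed

lemma ba_D: "\<mu> \<in> ba \<Omega> M \<Longrightarrow> add_on M \<mu> \<and> bnd_on M \<mu> \<and> (\<forall>A. A \<notin> M \<longrightarrow> \<mu> A = 0)"
  unfolding ba_def add_on_def bnd_on_def by blast

lemma ba_I: "add_on M \<mu> \<Longrightarrow> bnd_on M \<mu> \<Longrightarrow> (\<And>A. A \<notin> M \<Longrightarrow> \<mu> A = 0) \<Longrightarrow> \<mu> \<in> ba \<Omega> M"
  unfolding ba_def add_on_def bnd_on_def by blast

context fixes \<mu> assumes ba: "\<mu> \<in> ba \<Omega> M"
begin

lemma g_range: "0 \<le> gn \<Omega> M \<mu> A" "gn \<Omega> M \<mu> A \<le> 1"
proof -
  have a: "add_on M \<mu>" "bnd_on M \<mu>" using ba_D[OF ba] by auto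
  show "0 \<le> gn \<Omega> M \<mu> A" unfolding gn_def using tv_nonneg[OF a] by simp
  have "tv M \<mu> A \<le> max 1 (ba_norm \<Omega> M \<mu>)" using tv_le_top[OF a, of A] by (simp add: ba_norm_def)
  then show "gn \<Omega> M \<mu> A \<le> 1" unfolding gn_def by simp
qed

lemma g_add: "add_on M (gn \<Omega> M \<mu>)"
  using tv_add[of \<mu>] ba_D[OF ba] unfolding add_on_def gn_def by (simp add: add_divide_distrib)

lemma g_out: "A \<notin> M \<Longrightarrow> gn \<Omega> M \<mu> A = 0"
  by (simp add: gn_def tv_def)

lemma g_le_tv: "gn \<Omega> M \<mu> A \<le> tv M \<mu> A"
proof -
  have "0 \<le> tv M \<mu> A" using tv_nonneg ba_D[OF ba] by auto
  moreover have "1 \<le> max 1 (ba_norm \<Omega> M \<mu>)" by simp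
  ultimately have "tv M \<mu> A \<le> tv M \<mu> A * max 1 (ba_norm \<Omega> M \<mu>)"
    using mult_left_mono[of 1 "max 1 (ba_norm \<Omega> M \<mu>)" "tv M \<mu> A"] by simp
  then show ?thesis unfolding gn_def by (simp add: divide_le_eq)
qed

end

lemma series_props:
  assumes \<alpha>: "\<And>n. \<alpha> n \<ge> 0" "\<alpha> sums 1"
    and h: "\<And>n. add_on M (h n)" "\<And>n A. 0 \<le> h n A" "\<And>n A. h n A \<le> 1" "\<And>n A. A \<notin> M \<Longrightarrow> h n A = 0"
  defines "F \<equiv> (\<lambda>A. \<Sum>n. \<alpha> n * h n A)"
  shows "\<And>A. summable (\<lambda>n. \<alpha> n * h n A)" "add_on M F" "\<And>A. 0 \<le> F A" "\<And>A. F A \<le> 1"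
    "\<And>A. A \<notin> M \<Longrightarrow> F A = 0" "bnd_on M F" "F \<in> ba \<Omega> M" "\<And>A. A \<in> M \<Longrightarrow> tv M F A = F A"
proof -
  have sa: "summable \<alpha>" using \<alpha>(2) by (rule sums_summable)
  show sm: "summable (\<lambda>n. \<alpha> n * h n A)" for A
    by (rule summable_comparison_test[OF _ sa]) (auto intro!: exI[of _ 0] mult_left_le simp: \<alpha> h abs_mult)
  show ad: "add_on M F" unfolding add_on_def F_def
  proof (intro ballI impI)
    fix A B assume AB: "A \<in> M" "B \<in> M" "A \<inter> B = {}"
    have "(\<Sum>n. \<alpha> n * h n (A \<union> B)) = (\<Sum>n. \<alpha> n * h n A + \<alpha> n * h n B)"
      using addD[OF h(1) AB] by (simp add: distrib_left)
    also have "\<dots> = (\<Sum>n. \<alpha> n * h n A) + (\<Sum>n. \<alpha> n * h n B)"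
      by (rule suminf_add[OF sm sm, symmetric])
    finally show "(\<Sum>n. \<alpha> n * h n (A \<union> B)) = (\<Sum>n. \<alpha> n * h n A) + (\<Sum>n. \<alpha> n * h n B)" .
  qed
  show nn: "0 \<le> F A" for A unfolding F_def by (rule suminf_nonneg[OF sm]) (simp add: \<alpha> h)
  show le1: "F A \<le> 1" for A
  proof -
    have "F A \<le> (\<Sum>n. \<alpha> n)" unfolding F_def
      by (rule suminf_le[OF _ sm sa]) (auto intro: mult_left_le simp: \<alpha> h)
    then show ?thesis using \<alpha>(2) by (simp add: sums_iff)
  qed
  show out: "F A = 0" if "A \<notin> M" for A unfolding F_def using h(4)[OF that] by simp
  show bd: "bnd_on M F" unfolding bnd_on_def using nn le1 by (intro exI[of _ 1]) auto
  show "F \<in> ba \<Omega> M" by (rule ba_I[OF ad bd out])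
  show "tv M F A = F A" if "A \<in> M" for A by (rule tv_pos[OF ad bd nn that])
qed

lemma convA_props:
  assumes MM: "MM \<subseteq> ba \<Omega> M" and m: "m \<in> convA \<Omega> M MM"
  shows "add_on M m" "\<And>A. 0 \<le> m A" "\<And>A. m A \<le> 1"
    "\<And>A. A \<notin> M \<Longrightarrow> m A = 0" "bnd_on M m" "m \<in> ba \<Omega> M" "\<And>A. A \<in> M \<Longrightarrow> tv M m A = m A"
proof -
  obtain \<mu> \<alpha> where *: "\<forall>n. \<mu> n \<in> MM" "\<forall>n. \<alpha> n \<ge> 0" "\<alpha> sums 1"
     "m = (\<lambda>A. \<Sum>n. \<alpha> n * gn \<Omega> M (\<mu> n) A)" using m unfolding convA_iff by blast
  have b: "\<mu> n \<in> ba \<Omega> M" for n using * MM by auto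
  note P = series_props[of \<alpha> "\<lambda>n. gn \<Omega> M (\<mu> n)", OF _ *(3) g_add[OF b] g_range(1)[OF b] g_range(2)[OF b] g_out[OF b],
     folded *(4)]
  show "add_on M m" "\<And>A. 0 \<le> m A" "\<And>A. m A \<le> 1"
    "\<And>A. A \<notin> M \<Longrightarrow> m A = 0" "bnd_on M m" "m \<in> ba \<Omega> M" "\<And>A. A \<in> M \<Longrightarrow> tv M m A = m A"
    using P *(2) unfolding *(4) by auto
qed

lemma g_mono: "\<mu> \<in> ba \<Omega> M \<Longrightarrow> A \<in> M \<Longrightarrow> B \<in> M \<Longrightarrow> B \<subseteq> A \<Longrightarrow> gn \<Omega> M \<mu> B \<le> gn \<Omega> M \<mu> A"
  by (rule mono_pos[OF g_add]) (auto simp: g_range)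

context fixes l assumes lba: "l \<in> ba \<Omega> M"
begin

lemma la: "add_on M l" "bnd_on M l" using ba_D[OF lba] by auto

lemma sing_to_g:
  assumes mu: "\<mu> \<in> ba \<Omega> M" and s: "singular \<Omega> M l \<mu>" and c: "c \<ge> 0"
  shows "sing_to \<Omega> M l (\<lambda>B. c * gn \<Omega> M \<mu> B)"
  unfolding sing_to_def
proof (intro allI impI)
  fix \<epsilon> :: real assume e: "\<epsilon> > 0"
  have "\<epsilon> / (c + 1) > 0" using e c by simp
  then obtain A where A: "A \<in> M" "tv M l A + tv M \<mu> (\<Omega> - A) < \<epsilon> / (c + 1)"
    using s unfolding singular_def by blast
  have t0: "0 \<le> tv M l A" using tv_nonneg[OF la] .
  have "c * gn \<Omega> M \<mu> (\<Omega> - A) \<le> c * tv M \<mu> (\<Omega> - A)"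
    using g_le_tv[OF mu] c by (simp add: mult_left_mono)
  also have "\<dots> \<le> c * (tv M l A + tv M \<mu> (\<Omega> - A))" using t0 c by (simp add: mult_left_mono)
  finally have "tv M l A + c * gn \<Omega> M \<mu> (\<Omega> - A) \<le> (c + 1) * (tv M l A + tv M \<mu> (\<Omega> - A))"
    using t0 c tv_nonneg[of \<mu> "\<Omega> - A"] ba_D[OF mu] by (simp add: algebra_simps)
  also have "\<dots> < (c + 1) * (\<epsilon> / (c + 1))" using A(2) c by (intro mult_strict_left_mono) auto
  also have "\<dots> = \<epsilon>" using c by simp
  finally show "\<exists>A\<in>M. tv M l A + c * gn \<Omega> M \<mu> (\<Omega> - A) < \<epsilon>" using A(1) by blast
qed

lemma sing_to_add:
  assumes s1: "sing_to \<Omega> M l f1" and s2: "sing_to \<Omega> M l f2"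
    and m1: "\<And>A B. A \<in> M \<Longrightarrow> B \<in> M \<Longrightarrow> B \<subseteq> A \<Longrightarrow> f1 B \<le> f1 A"
    and m2: "\<And>A B. A \<in> M \<Longrightarrow> B \<in> M \<Longrightarrow> B \<subseteq> A \<Longrightarrow> f2 B \<le> f2 A"
  shows "sing_to \<Omega> M l (\<lambda>B. f1 B + f2 B)"
  unfolding sing_to_def
proof (intro allI impI)
  fix \<epsilon> :: real assume e: "\<epsilon> > 0"
  obtain A1 where A1: "A1 \<in> M" "tv M l A1 + f1 (\<Omega> - A1) < \<epsilon>/2"
    using s1 e unfolding sing_to_def by (meson half_gt_zero)
  obtain A2 where A2: "A2 \<in> M" "tv M l A2 + f2 (\<Omega> - A2) < \<epsilon>/2"
    using s2 e unfolding sing_to_def by (meson half_gt_zero)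
  have "tv M l (A1 \<union> A2) \<le> tv M l A1 + tv M l A2" by (rule tv_sub[OF la A1(1) A2(1)])
  moreover have "f1 (\<Omega> - (A1 \<union> A2)) \<le> f1 (\<Omega> - A1)" by (rule m1) (use A1 A2 in auto)
  moreover have "f2 (\<Omega> - (A1 \<union> A2)) \<le> f2 (\<Omega> - A2)" by (rule m2) (use A1 A2 in auto)
  ultimately have "tv M l (A1 \<union> A2) + (f1 (\<Omega> - (A1 \<union> A2)) + f2 (\<Omega> - (A1 \<union> A2))) < \<epsilon>"
    using A1 A2 by simp
  then show "\<exists>A\<in>M. tv M l A + (f1 (\<Omega> - A) + f2 (\<Omega> - A)) < \<epsilon>" using A1 A2 by blast
qed

lemma sing_to_conv:
  assumes MM: "MM \<subseteq> ba \<Omega> M" and m: "m \<in> convA \<Omega> M MM" and lp: "\<forall>\<mu>\<in>MM. singular \<Omega> M l \<mu>"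
  shows "sing_to \<Omega> M l m"
proof -
  obtain \<mu> \<alpha> where *: "\<forall>n. \<mu> n \<in> MM" "\<forall>n. \<alpha> n \<ge> 0" "\<alpha> sums 1"
     "m = (\<lambda>A. \<Sum>n. \<alpha> n * gn \<Omega> M (\<mu> n) A)" using m unfolding convA_iff by blast
  have b: "\<mu> n \<in> ba \<Omega> M" for n using * MM by auto
  note P = series_props[of \<alpha> "\<lambda>n. gn \<Omega> M (\<mu> n)", OF *(2)[rule_format] *(3) g_add[OF b] g_range(1)[OF b] g_range(2)[OF b] g_out[OF b]]
  define S where "S N = (\<lambda>B. \<Sum>n<N. \<alpha> n * gn \<Omega> M (\<mu> n) B)" for N
  have Smono: "S N B \<le> S N A" if "A \<in> M" "B \<in> M" "B \<subseteq> A" for N A B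
    unfolding S_def by (intro sum_mono mult_left_mono g_mono[OF b that]) (use * in auto)
  have Ssing: "sing_to \<Omega> M l (S N)" for N
  proof (induction N)
    case 0
    show ?case unfolding sing_to_def S_def
      by (auto intro!: bexI[of _ "{}"] simp: tv_empty[OF la])
  next
    case (Suc N)
    have "sing_to \<Omega> M l (\<lambda>B. S N B + \<alpha> N * gn \<Omega> M (\<mu> N) B)"
      by (rule sing_to_add[OF Suc sing_to_g[OF b]]) (use * lp Smono g_mono[OF b] in \<open>auto intro: mult_left_mono\<close>)
    then show ?case unfolding S_def by simp
  qed
  show ?thesis unfolding sing_to_def
  proof (intro allI impI)
    fix \<epsilon> :: real assume e: "\<epsilon> > 0"
    have "(\<lambda>N. \<Sum>n<N. \<alpha> n) \<longlonglongrightarrow> 1" using *(3) by (simp add: sums_def)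
    then obtain N where N: "\<bar>(\<Sum>n<N. \<alpha> n) - 1\<bar> < \<epsilon>/2"
      using e unfolding LIMSEQ_iff by (metis half_gt_zero order_refl real_norm_def)
    obtain A where A: "A \<in> M" "tv M l A + S N (\<Omega> - A) < \<epsilon>/2"
      using Ssing[of N] e unfolding sing_to_def by (meson half_gt_zero)
    define B where "B = \<Omega> - A"
    have sa: "summable \<alpha>" using *(3) by (rule sums_summable)
    have "m B = (\<Sum>n. \<alpha> (n + N) * gn \<Omega> M (\<mu> (n + N)) B) + S N B"
      unfolding *(4) S_def by (rule suminf_split_initial_segment[OF P(1)])
    also have "(\<Sum>n. \<alpha> (n + N) * gn \<Omega> M (\<mu> (n + N)) B) \<le> (\<Sum>n. \<alpha> (n + N))"
      by (rule suminf_le) (auto intro: mult_left_le simp: * g_range[OF b] summable_ignore_initial_segment[OF P(1)]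
           summable_ignore_initial_segment[OF sa] sa)
    also have "(\<Sum>n. \<alpha> (n + N)) = 1 - (\<Sum>n<N. \<alpha> n)"
      using suminf_minus_initial_segment[OF sa, of N] *(3) by (simp add: sums_iff)
    finally have "m B \<le> 1 - (\<Sum>n<N. \<alpha> n) + S N B" by simp
    then have "tv M l A + m (\<Omega> - A) < \<epsilon>" using A N unfolding B_def by linarith
    then show "\<exists>A\<in>M. tv M l A + m (\<Omega> - A) < \<epsilon>" using A(1) by blast
  qed
qed

end

lemma easy_dir:
  assumes MM: "MM \<subseteq> ba \<Omega> M" and nu: "\<nu> \<in> ba \<Omega> M" and m: "m \<in> convA \<Omega> M MM"
    and ac: "abs_cont M \<nu> m" and l: "l \<in> perp \<Omega> M MM"
  shows "singular \<Omega> M \<nu> l"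
  unfolding singular_def
proof (intro allI impI)
  fix \<epsilon> :: real assume e: "\<epsilon> > 0"
  have lba: "l \<in> ba \<Omega> M" and lp: "\<forall>\<mu>\<in>MM. singular \<Omega> M l \<mu>" using l by (auto simp: perp_def)
  obtain \<delta> where d: "\<delta> > 0" "\<And>A. A \<in> M \<Longrightarrow> tv M m A < \<delta> \<Longrightarrow> tv M \<nu> A < \<epsilon>/2"
    using ac e unfolding abs_cont_def by (meson half_gt_zero)
  obtain A where A: "A \<in> M" "tv M l A + m (\<Omega> - A) < min \<delta> (\<epsilon>/2)"
    using sing_to_conv[OF lba MM m lp] d e unfolding sing_to_def by (meson half_gt_zero min_less_iff_conj)
  note mp = convA_props[OF MM m]
  have t0: "0 \<le> tv M l A" using tv_nonneg[OF la[OF lba]] .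
  have C: "\<Omega> - A \<in> M" using A by auto
  have "tv M m (\<Omega> - A) < \<delta>" using A mp(7)[OF C] t0 by simp
  then have "tv M \<nu> (\<Omega> - A) < \<epsilon>/2" using d(2)[OF C] by simp
  moreover have "tv M l A < \<epsilon>/2" using A mp(2)[of "\<Omega> - A"] by simp
  moreover have "\<Omega> - (\<Omega> - A) = A" using A sets_into_space by auto
  ultimately show "\<exists>A\<in>M. tv M \<nu> A + tv M l (\<Omega> - A) < \<epsilon>" using C by (intro bexI[of _ "\<Omega> - A"]) auto
qed

lemma rctxI: "add_on M v \<Longrightarrow> bnd_on M v \<Longrightarrow> (\<And>A. 0 \<le> v A) \<Longrightarrow> add_on M m \<Longrightarrow> (\<And>A. 0 \<le> m A)
  \<Longrightarrow> rctx \<Omega> M v m"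
  by (intro rctx.intro rctx_axioms.intro) (unfold_locales, auto)

end

context rctx
begin

lemma phi_upper: "B \<in> M \<Longrightarrow> B \<subseteq> A \<Longrightarrow> m B < d \<Longrightarrow> v B \<le> phi M v m d A"
  unfolding phi_def
proof (rule cSUP_upper)
  obtain c where c: "\<And>A. A \<in> M \<Longrightarrow> \<bar>v A\<bar> \<le> c" using vb unfolding bnd_on_def by blast
  show "bdd_above (v ` {B \<in> M. B \<subseteq> A \<and> m B < d})"
    unfolding bdd_above_def using c by (auto dest: abs_le_D1)
qed auto

lemma phi_least: "d > 0 \<Longrightarrow> (\<And>B. B \<in> M \<Longrightarrow> B \<subseteq> A \<Longrightarrow> m B < d \<Longrightarrow> v B \<le> c) \<Longrightarrow> phi M v m d A \<le> c"
  unfolding phi_def by (rule cSUP_least) (use add_emptyD[OF ma] in auto)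

lemma phi_nonneg: "d > 0 \<Longrightarrow> 0 \<le> phi M v m d A"
  using phi_upper[of "{}" A d] add_emptyD[OF ma] add_emptyD[OF va] by auto

lemma phi_le_v: "A \<in> M \<Longrightarrow> d > 0 \<Longrightarrow> phi M v m d A \<le> v A"
  by (rule phi_least) (auto intro: mono_pos[OF va] vp)

lemma phi_mono: "0 < d1 \<Longrightarrow> d1 \<le> d2 \<Longrightarrow> phi M v m d1 A \<le> phi M v m d2 A"
  by (rule phi_least) (auto intro: phi_upper)

lemma phi_sub:
  assumes A: "A1 \<in> M" "A2 \<in> M" "A1 \<inter> A2 = {}" and d: "d > 0"
  shows "phi M v m d (A1 \<union> A2) \<le> phi M v m d A1 + phi M v m d A2"
proof (rule phi_least[OF d])
  fix B assume B: "B \<in> M" "B \<subseteq> A1 \<union> A2" "m B < d"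
  have "B = (B \<inter> A1) \<union> (B \<inter> A2)" using B by auto
  then have "v B = v (B \<inter> A1) + v (B \<inter> A2)"
    using addD[OF va, of "B \<inter> A1" "B \<inter> A2"] A B by auto
  also have "\<dots> \<le> phi M v m d A1 + phi M v m d A2"
  proof (intro add_mono phi_upper)
    have "B \<inter> A1 \<in> M" "B \<inter> A2 \<in> M" using A B by auto
    then show "m (B \<inter> A1) < d" "m (B \<inter> A2) < d"
      using mono_pos[OF ma mp, of B "B \<inter> A1"] mono_pos[OF ma mp, of B "B \<inter> A2"] B by auto
  qed (use A B in auto)
  finally show "v B \<le> phi M v m d A1 + phi M v m d A2" .
qed

lemma phi_super:
  assumes A: "A1 \<in> M" "A2 \<in> M" "A1 \<inter> A2 = {}" and d: "d1 > 0" "d2 > 0"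
  shows "phi M v m d1 A1 + phi M v m d2 A2 \<le> phi M v m (d1 + d2) (A1 \<union> A2)"
proof -
  have "phi M v m d1 A1 \<le> phi M v m (d1 + d2) (A1 \<union> A2) - phi M v m d2 A2"
  proof (rule phi_least[OF d(1)])
    fix B1 assume B1: "B1 \<in> M" "B1 \<subseteq> A1" "m B1 < d1"
    have "phi M v m d2 A2 \<le> phi M v m (d1 + d2) (A1 \<union> A2) - v B1"
    proof (rule phi_least[OF d(2)])
      fix B2 assume B2: "B2 \<in> M" "B2 \<subseteq> A2" "m B2 < d2"
      have dj: "B1 \<inter> B2 = {}" using A B1 B2 by auto
      have "v (B1 \<union> B2) = v B1 + v B2" using addD[OF va B1(1) B2(1) dj] .
      moreover have "v (B1 \<union> B2) \<le> phi M v m (d1 + d2) (A1 \<union> A2)"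
        by (rule phi_upper) (use B1 B2 addD[OF ma B1(1) B2(1) dj] in auto)
      ultimately show "v B2 \<le> phi M v m (d1 + d2) (A1 \<union> A2) - v B1" by simp
    qed
    then show "v B1 \<le> phi M v m (d1 + d2) (A1 \<union> A2) - phi M v m d2 A2" by simp
  qed
  then show ?thesis by simp
qed

lemma rho_le_phi: "A \<in> M \<Longrightarrow> d > 0 \<Longrightarrow> rho M v m A \<le> phi M v m d A"
  unfolding rho_def by (auto intro!: cINF_lower simp: bdd_below_def intro: phi_nonneg)

lemma rho_ge: "A \<in> M \<Longrightarrow> (\<And>d. d > 0 \<Longrightarrow> c \<le> phi M v m d A) \<Longrightarrow> c \<le> rho M v m A"
  unfolding rho_def by (auto intro!: cINF_greatest)

lemma rho_approx: "A \<in> M \<Longrightarrow> \<epsilon> > 0 \<Longrightarrow> \<exists>d>0. phi M v m d A < rho M v m A + \<epsilon>"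
  using rho_ge[of A "rho M v m A + \<epsilon>"] by force

lemma rho_nonneg: "0 \<le> rho M v m A"
proof (cases "A \<in> M")
  case True then show ?thesis by (rule rho_ge) (rule phi_nonneg)
qed (simp add: rho_def)

lemma rho_le_v: "A \<in> M \<Longrightarrow> rho M v m A \<le> v A"
  using rho_le_phi[of A 1] phi_le_v[of A 1] by simp

lemma rho_add: "add_on M (rho M v m)"
  unfolding add_on_def
proof (intro ballI impI)
  fix A1 A2 assume A: "A1 \<in> M" "A2 \<in> M" "A1 \<inter> A2 = {}"
  have U: "A1 \<union> A2 \<in> M" using A by auto
  show "rho M v m (A1 \<union> A2) = rho M v m A1 + rho M v m A2"
  proof (rule antisym)
    show "rho M v m (A1 \<union> A2) \<le> rho M v m A1 + rho M v m A2"
    proof (rule field_le_epsilon)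
      fix e :: real assume e: "e > 0"
      obtain d1 where d1: "d1 > 0" "phi M v m d1 A1 < rho M v m A1 + e/2" using rho_approx[OF A(1), of "e/2"] e by auto
      obtain d2 where d2: "d2 > 0" "phi M v m d2 A2 < rho M v m A2 + e/2" using rho_approx[OF A(2), of "e/2"] e by auto
      define d where "d = min d1 d2"
      have "rho M v m (A1 \<union> A2) \<le> phi M v m d (A1 \<union> A2)" using rho_le_phi[OF U] d1 d2 by (simp add: d_def)
      also have "\<dots> \<le> phi M v m d A1 + phi M v m d A2" using phi_sub[OF A] d1 d2 by (simp add: d_def)
      also have "\<dots> \<le> phi M v m d1 A1 + phi M v m d2 A2"
        using phi_mono d1 d2 by (intro add_mono) (auto simp: d_def)
      finally show "rho M v m (A1 \<union> A2) \<le> rho M v m A1 + rho M v m A2 + e" using d1 d2 by simp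
    qed
    show "rho M v m A1 + rho M v m A2 \<le> rho M v m (A1 \<union> A2)"
    proof (rule field_le_epsilon)
      fix e :: real assume e: "e > 0"
      obtain d where d: "d > 0" "phi M v m d (A1 \<union> A2) < rho M v m (A1 \<union> A2) + e"
        using rho_approx[OF U e] by auto
      have "rho M v m A1 + rho M v m A2 \<le> phi M v m (d/2) A1 + phi M v m (d/2) A2"
        using rho_le_phi A d by (intro add_mono) auto
      also have "\<dots> \<le> phi M v m (d/2 + d/2) (A1 \<union> A2)" using phi_super[OF A, of "d/2" "d/2"] d by simp
      finally show "rho M v m A1 + rho M v m A2 \<le> rho M v m (A1 \<union> A2) + e" using d by simp
    qed
  qed
qed

lemma rho_ba: "rho M v m \<in> ba \<Omega> M"
proof (rule ba_I[OF rho_add])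
  obtain c where c: "\<And>A. A \<in> M \<Longrightarrow> \<bar>v A\<bar> \<le> c" using vb unfolding bnd_on_def by blast
  show "bnd_on M (rho M v m)" unfolding bnd_on_def
    using c rho_le_v rho_nonneg by (intro exI[of _ c]) (force dest: abs_le_D1)
qed (simp add: rho_def)

lemma rho_tv: "tv M (rho M v m) A = rho M v m A"
proof (cases "A \<in> M")
  case True
  have b: "bnd_on M (rho M v m)" using ba_D[OF rho_ba] by blast
  show ?thesis by (rule tv_pos[OF rho_add b rho_nonneg True])
qed (simp add: tv_def rho_def)

lemma rho_key:
  assumes e: "\<epsilon> > 0"
  shows "\<exists>d>0. \<forall>B\<in>M. m B < d \<longrightarrow> v B \<le> rho M v m B + \<epsilon>"
proof -
  obtain d0 where d0: "d0 > 0" "phi M v m d0 \<Omega> < rho M v m \<Omega> + \<epsilon>" using rho_approx[OF top e] by auto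
  have "v B \<le> rho M v m B + \<epsilon>" if B: "B \<in> M" "m B < d0/2" for B
  proof -
    have C: "\<Omega> - B \<in> M" using B by auto
    have U: "B \<union> (\<Omega> - B) = \<Omega>" using B sets_into_space by auto
    have "v B \<le> phi M v m (d0/2) B" using phi_upper[OF B(1) _ B(2)] by simp
    moreover have "rho M v m (\<Omega> - B) \<le> phi M v m (d0/2) (\<Omega> - B)" using rho_le_phi[OF C] d0 by simp
    moreover have "phi M v m (d0/2) B + phi M v m (d0/2) (\<Omega> - B) \<le> phi M v m d0 \<Omega>"
      using phi_super[OF B(1) C, of "d0/2" "d0/2"] d0 U by auto
    moreover have "rho M v m \<Omega> = rho M v m B + rho M v m (\<Omega> - B)"
      using addD[OF rho_add B(1) C] U by auto
    ultimately show ?thesis using d0 by linarith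
  qed
  then show ?thesis using d0 by (intro exI[of _ "d0/2"]) auto
qed

lemma rho_zero_ac:
  assumes z: "rho M v m \<Omega> = 0" and e: "\<epsilon> > 0"
  shows "\<exists>d>0. \<forall>A\<in>M. m A < d \<longrightarrow> v A < \<epsilon>"
proof -
  obtain d where d: "d > 0" "phi M v m d \<Omega> < \<epsilon>" using rho_approx[OF top e] z by auto
  have "v A < \<epsilon>" if "A \<in> M" "m A < d" for A
    using phi_upper[of A \<Omega> d] that sets_into_space d by force
  then show ?thesis using d by blast
qed

end

context algebra
begin

lemma rho_compare:
  assumes va: "add_on M v" and vb: "bnd_on M v" and vp: "\<And>A. 0 \<le> v A"
    and m1: "add_on M m1" "\<And>A. 0 \<le> m1 A" and m2: "add_on M m2" "\<And>A. 0 \<le> m2 A"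
    and c: "c > 0" and le: "\<And>A. A \<in> M \<Longrightarrow> c * m1 A \<le> m2 A"
  shows "rho M v m2 \<Omega> \<le> rho M v m1 \<Omega>"
proof -
  interpret R1: rctx \<Omega> M v m1 by (rule rctxI[OF va vb vp m1])
  interpret R2: rctx \<Omega> M v m2 by (rule rctxI[OF va vb vp m2])
  show ?thesis
proof (rule R1.rho_ge[OF top])
  fix d :: real assume d: "d > 0"
  have "rho M v m2 \<Omega> \<le> phi M v m2 (c * d) \<Omega>" using R2.rho_le_phi[OF top] c d by simp
  also have "\<dots> \<le> phi M v m1 d \<Omega>"
  proof (rule R2.phi_least)
    fix B assume B: "B \<in> M" "B \<subseteq> \<Omega>" "m2 B < c * d"
    have "c * m1 B < c * d" using le[OF B(1)] B(3) by simp
    then have "m1 B < d" using c by simp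
    then show "v B \<le> phi M v m1 d \<Omega>" using R1.phi_upper[OF B(1,2)] by simp
  qed (use c d in simp)
  finally show "rho M v m2 \<Omega> \<le> phi M v m1 d \<Omega>" .
qed
qed

lemma rho_improve:
  assumes va: "add_on M v" and vb: "bnd_on M v" and vp: "\<And>A. 0 \<le> v A"
    and m: "add_on M m" "\<And>A. 0 \<le> m A" and m2: "add_on M m2" "\<And>A. 0 \<le> m2 A"
    and mu: "\<And>A. 0 \<le> mu A" and eq: "\<And>A. m2 A = (m A + mu A) / 2"
    and e0: "\<And>A. A \<in> M \<Longrightarrow> \<epsilon>0 \<le> rho M v m A + mu (\<Omega> - A)"
  shows "rho M v m2 \<Omega> \<le> rho M v m \<Omega> - \<epsilon>0"
proof -
  interpret R1: rctx \<Omega> M v m by (rule rctxI[OF va vb vp m])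
  interpret R2: rctx \<Omega> M v m2 by (rule rctxI[OF va vb vp m2])
  have "rho M v m2 \<Omega> \<le> rho M v m \<Omega> - \<epsilon>0 + 2 * \<eta>" if h: "\<eta> > 0" for \<eta>
  proof -
    obtain d where d: "d > 0" "\<And>B. B \<in> M \<Longrightarrow> m B < d \<Longrightarrow> v B \<le> rho M v m B + \<eta>"
      using R1.rho_key[OF h] by blast
    define d1 where "d1 = min d \<eta>"
    have d1: "d1 > 0" using d h by (simp add: d1_def)
    have "rho M v m2 \<Omega> \<le> phi M v m2 (d1/2) \<Omega>" using R2.rho_le_phi[OF top] d1 by simp
    also have "\<dots> \<le> rho M v m \<Omega> - \<epsilon>0 + 2 * \<eta>"
    proof (rule R2.phi_least)
      fix B assume B: "B \<in> M" "B \<subseteq> \<Omega>" "m2 B < d1/2"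
      have mB: "m B < d" "mu B < \<eta>" using B(3) eq[of B] m(2)[of B] mu[of B] by (auto simp: d1_def)
      have C: "\<Omega> - B \<in> M" using B by auto
      have U: "B \<union> (\<Omega> - B) = \<Omega>" using B by auto
      have "rho M v m \<Omega> = rho M v m B + rho M v m (\<Omega> - B)"
        using addD[OF R1.rho_add B(1) C] U by auto
      moreover have "\<Omega> - (\<Omega> - B) = B" using B by auto
      then have "\<epsilon>0 \<le> rho M v m (\<Omega> - B) + mu B" using e0[OF C] by simp
      moreover have "v B \<le> rho M v m B + \<eta>" using d(2)[OF B(1) mB(1)] .
      ultimately show "v B \<le> rho M v m \<Omega> - \<epsilon>0 + 2 * \<eta>" using mB by linarith
    qed (use d1 in simp)
    finally show ?thesis .
  qed
  note h = this
  show ?thesis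
  proof (rule field_le_epsilon)
    fix e :: real assume "e > 0"
    then have "e/2 > 0" by simp
    from h[OF this] show "rho M v m2 \<Omega> \<le> rho M v m \<Omega> - \<epsilon>0 + e" by simp
  qed
qed

lemma convA_single:
  assumes mu: "\<mu> \<in> MM" shows "gn \<Omega> M \<mu> \<in> convA \<Omega> M MM"
  unfolding convA_iff
proof (intro exI conjI)
  show "\<forall>n. (\<lambda>_. \<mu>) n \<in> MM" using mu by simp
  show "\<forall>n. 0 \<le> (\<lambda>n. if n = 0 then 1 else 0::real) n" by simp
  show "(\<lambda>n. if n = 0 then 1 else 0::real) sums 1" using sums_single[of 0 "\<lambda>_. 1::real"] by simp
  show "gn \<Omega> M \<mu> = (\<lambda>A. \<Sum>n. (if n = 0 then 1 else 0) * gn \<Omega> M ((\<lambda>_. \<mu>) n) A)"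
  proof
    fix A
    have "(\<Sum>n. (if n = 0 then 1 else 0) * gn \<Omega> M \<mu> A) = (\<Sum>n. if n = 0 then gn \<Omega> M \<mu> A else 0)"
      by (rule arg_cong[where f=suminf]) auto
    then show "gn \<Omega> M \<mu> A = (\<Sum>n. (if n = 0 then 1 else 0) * gn \<Omega> M ((\<lambda>_. \<mu>) n) A)"
      using sums_single[of 0 "\<lambda>_. gn \<Omega> M \<mu> A"] by (simp add: sums_iff)
  qed
qed

lemma convA_half:
  assumes MM: "MM \<subseteq> ba \<Omega> M" and m: "m \<in> convA \<Omega> M MM" and mu: "\<mu> \<in> MM"
  shows "(\<lambda>A. (m A + gn \<Omega> M \<mu> A) / 2) \<in> convA \<Omega> M MM"
proof -
  obtain \<mu>s \<alpha> where *: "\<forall>n. \<mu>s n \<in> MM" "\<forall>n. \<alpha> n \<ge> 0" "\<alpha> sums 1"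
     "m = (\<lambda>A. \<Sum>n. \<alpha> n * gn \<Omega> M (\<mu>s n) A)" using m unfolding convA_iff by blast
  have b: "\<mu>s n \<in> ba \<Omega> M" for n using * MM by auto
  note P = series_props[of \<alpha> "\<lambda>n. gn \<Omega> M (\<mu>s n)", OF *(2)[rule_format] *(3) g_add[OF b] g_range(1)[OF b] g_range(2)[OF b] g_out[OF b]]
  define \<beta> where "\<beta> = case_nat (1/2) (\<lambda>n. \<alpha> n / 2)"
  define \<mu>' where "\<mu>' = case_nat \<mu> \<mu>s"
  show ?thesis unfolding convA_iff
  proof (intro exI conjI)
    show "\<forall>n. \<mu>' n \<in> MM" using * mu by (auto simp: \<mu>'_def split: nat.split)
    show "\<forall>n. 0 \<le> \<beta> n" using * by (auto simp: \<beta>_def split: nat.split)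
    have "(\<lambda>n. \<beta> (Suc n)) sums (1/2)" unfolding \<beta>_def using sums_divide[OF *(3), of 2] by simp
    then show "\<beta> sums 1" using sums_Suc_iff[of \<beta> "1/2"] by (simp add: \<beta>_def)
    show "(\<lambda>A. (m A + gn \<Omega> M \<mu> A) / 2) = (\<lambda>A. \<Sum>n. \<beta> n * gn \<Omega> M (\<mu>' n) A)"
    proof
      fix A
      have "(\<lambda>n. \<alpha> n * gn \<Omega> M (\<mu>s n) A) sums m A" using P(1)[of A] *(4) by (simp add: summable_sums)
      then have "(\<lambda>n. \<beta> (Suc n) * gn \<Omega> M (\<mu>' (Suc n)) A) sums (m A / 2)"
        unfolding \<beta>_def \<mu>'_def using sums_divide[of _ "m A" 2] by simp
      then have "(\<lambda>n. \<beta> n * gn \<Omega> M (\<mu>' n) A) sums (m A / 2 + gn \<Omega> M \<mu> A / 2)"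
        using sums_Suc_iff[of "\<lambda>n. \<beta> n * gn \<Omega> M (\<mu>' n) A"] by (simp add: \<beta>_def \<mu>'_def)
      then show "(m A + gn \<Omega> M \<mu> A) / 2 = (\<Sum>n. \<beta> n * gn \<Omega> M (\<mu>' n) A)"
        by (simp add: sums_iff add_divide_distrib)
    qed
  qed
qed

lemma convA_count:
  assumes MM: "MM \<subseteq> ba \<Omega> M" and mk: "\<And>k. mk k \<in> convA \<Omega> M MM" and c: "\<And>k. c k \<ge> 0" "c sums 1"
  shows "(\<lambda>A. \<Sum>k. c k * mk k A) \<in> convA \<Omega> M MM"
proof -
  have "\<forall>k. \<exists>\<mu>s \<alpha>. (\<forall>n. \<mu>s n \<in> MM) \<and> (\<forall>n. \<alpha> n \<ge> 0) \<and> \<alpha> sums 1 \<and>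
     mk k = (\<lambda>A. \<Sum>n. \<alpha> n * gn \<Omega> M (\<mu>s n) A)" using mk unfolding convA_iff by blast
  from choice2[OF this] obtain \<mu>s \<alpha> where **: "\<forall>k. (\<forall>n. \<mu>s k n \<in> MM) \<and> (\<forall>n. \<alpha> k n \<ge> 0) \<and> \<alpha> k sums 1 \<and>
     mk k = (\<lambda>A. \<Sum>n. \<alpha> k n * gn \<Omega> M (\<mu>s k n) A)" by blast
  have *: "\<And>k n. \<mu>s k n \<in> MM" "\<And>k n. \<alpha> k n \<ge> 0" "\<And>k. \<alpha> k sums 1"
     "\<And>k. mk k = (\<lambda>A. \<Sum>n. \<alpha> k n * gn \<Omega> M (\<mu>s k n) A)" using ** by blast+
  have b: "\<mu>s k n \<in> ba \<Omega> M" for k n using * MM by auto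
  have mkp: "0 \<le> mk k A" "mk k A \<le> 1" for k A using convA_props[OF MM mk] by auto
  have sc: "summable c" using c(2) by (rule sums_summable)
  define \<alpha>' where "\<alpha>' j = c (fst (prod_decode j)) * \<alpha> (fst (prod_decode j)) (snd (prod_decode j))" for j
  define \<mu>' where "\<mu>' j = \<mu>s (fst (prod_decode j)) (snd (prod_decode j))" for j
  show ?thesis unfolding convA_iff
  proof (intro exI conjI)
    show "\<forall>n. \<mu>' n \<in> MM" using * by (simp add: \<mu>'_def)
    show "\<forall>n. 0 \<le> \<alpha>' n" using * c by (simp add: \<alpha>'_def)
    show "\<alpha>' sums 1"
    proof -
      have "(\<lambda>j. (\<lambda>p. c (fst p) * \<alpha> (fst p) (snd p)) (prod_decode j)) sums 1"
        by (rule double_sums[where a = c]) (use * c sums_mult[OF *(3), of "c _"] in auto)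
      then show ?thesis unfolding \<alpha>'_def[abs_def] by simp
    qed
    show "(\<lambda>A. \<Sum>k. c k * mk k A) = (\<lambda>A. \<Sum>n. \<alpha>' n * gn \<Omega> M (\<mu>' n) A)"
    proof
      fix A
      have P1: "summable (\<lambda>n. \<alpha> k n * gn \<Omega> M (\<mu>s k n) A)" for k
        by (rule series_props(1)[of "\<alpha> k" "\<lambda>n. gn \<Omega> M (\<mu>s k n)", OF *(2) *(3) g_add[OF b] g_range(1)[OF b] g_range(2)[OF b] g_out[OF b]])
      have r: "(\<lambda>n. c k * \<alpha> k n * gn \<Omega> M (\<mu>s k n) A) sums (c k * mk k A)" for k
        using sums_mult[OF summable_sums[OF P1[of k]], of "c k"] *(4)[of k] by (simp add: mult.assoc)
      have sk: "summable (\<lambda>k. c k * mk k A)"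
        by (rule summable_comparison_test[OF _ sc]) (auto intro!: exI[of _ 0] mult_left_le simp: c mkp abs_mult)
      have "(\<lambda>j. (\<lambda>p. c (fst p) * \<alpha> (fst p) (snd p) * gn \<Omega> M (\<mu>s (fst p) (snd p)) A) (prod_decode j))
              sums (\<Sum>k. c k * mk k A)"
        by (rule double_sums[OF _ _ summable_sums[OF sk]]) (use * c g_range[OF b] r in auto)
      then show "(\<Sum>k. c k * mk k A) = (\<Sum>n. \<alpha>' n * gn \<Omega> M (\<mu>' n) A)"
        by (simp add: \<alpha>'_def \<mu>'_def sums_iff)
    qed
  qed
qed


lemma hard_dir:
  assumes MM: "MM \<subseteq> ba \<Omega> M" and ne: "MM \<noteq> {}" and nu: "\<nu> \<in> perp \<Omega> M (perp \<Omega> M MM)"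
  shows "\<nu> \<in> Lset \<Omega> M MM"
proof -
  have nba: "\<nu> \<in> ba \<Omega> M" and nperp: "\<And>l. l \<in> perp \<Omega> M MM \<Longrightarrow> singular \<Omega> M \<nu> l"
    using nu by (auto simp: perp_def)
  define v where "v = tv M \<nu>"
  have nab: "add_on M \<nu>" "bnd_on M \<nu>" using ba_D[OF nba] by auto
  have va: "add_on M v" and vb: "bnd_on M v" and vp: "\<And>A. 0 \<le> v A"
    unfolding v_def using tv_add[OF nab] tv_bnd[OF nab] tv_nonneg[OF nab] by auto
  have cp: "add_on M m" "\<And>A. 0 \<le> m A" if "m \<in> convA \<Omega> M MM" for m
    using convA_props[OF MM that] by auto
  define s where "s m = rho M v m \<Omega>" for m
  have s_nn: "0 \<le> s m" if "m \<in> convA \<Omega> M MM" for m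
    unfolding s_def by (rule rctx.rho_nonneg[OF rctxI[OF va vb vp cp[OF that]]])
  define S where "S = s ` convA \<Omega> M MM"
  obtain \<mu>0 where \<mu>0: "\<mu>0 \<in> MM" using ne by blast
  have Sne: "S \<noteq> {}" unfolding S_def using convA_single[OF \<mu>0] by blast
  have Sbdd: "bdd_below S" unfolding S_def bdd_below_def using s_nn by blast
  have "\<forall>k. \<exists>m. m \<in> convA \<Omega> M MM \<and> s m < Inf S + inverse (real (Suc k))"
  proof
    fix k
    have "Inf S < Inf S + inverse (real (Suc k))" by simp
    from cInf_lessD[OF Sne this] show "\<exists>m. m \<in> convA \<Omega> M MM \<and> s m < Inf S + inverse (real (Suc k))"
      unfolding S_def by blast
  qed
  from choice[OF this] obtain mk where mk: "\<And>k. mk k \<in> convA \<Omega> M MM" "\<And>k. s (mk k) < Inf S + inverse (real (Suc k))"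
    by blast
  define c where "c k = (1/2::real) ^ Suc k" for k
  have c: "\<And>k. c k \<ge> 0" "c sums 1" using power_half_series unfolding c_def[abs_def] by auto
  have sc: "summable c" using c(2) by (rule sums_summable)
  define m where "m = (\<lambda>A. \<Sum>k. c k * mk k A)"
  have mA: "m \<in> convA \<Omega> M MM" unfolding m_def by (rule convA_count[OF MM mk(1) c])
  note mp = cp[OF mA]
  have smk: "s m \<le> s (mk k)" for k
    unfolding s_def
  proof (rule rho_compare[OF va vb vp cp[OF mk(1)] mp])
    show "c k > 0" by (simp add: c_def)
    fix A assume "A \<in> M"
    have mkp: "0 \<le> mk j A" "mk j A \<le> 1" for j using convA_props[OF MM mk(1)] by auto
    have sk: "summable (\<lambda>j. c j * mk j A)"
      by (rule summable_comparison_test[OF _ sc]) (auto intro!: exI[of _ 0] mult_left_le simp: c mkp abs_mult)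
    have "sum (\<lambda>j. c j * mk j A) {k} \<le> (\<Sum>j. c j * mk j A)"
      by (rule sum_le_suminf[OF sk]) (auto simp: c mkp)
    then show "c k * mk k A \<le> m A" by (simp add: m_def)
  qed
  have sm_le: "s m \<le> Inf S"
  proof (rule ccontr)
    assume "\<not> s m \<le> Inf S"
    then have "s m - Inf S > 0" by simp
    from reals_Archimedean[OF this] obtain k where "inverse (real (Suc k)) < s m - Inf S" by blast
    with smk[of k] mk(2)[of k] show False by simp
  qed
  have Sle: "Inf S \<le> s m'" if "m' \<in> convA \<Omega> M MM" for m'
    using cInf_lower[OF _ Sbdd, of "s m'"] that unfolding S_def by blast
  interpret R: rctx \<Omega> M v m by (rule rctxI[OF va vb vp mp])
  define \<rho> where "\<rho> = rho M v m"
  have \<rho>ba: "\<rho> \<in> ba \<Omega> M" unfolding \<rho>_def by (rule R.rho_ba)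
  have sing: "singular \<Omega> M \<rho> \<mu>" if mu: "\<mu> \<in> MM" for \<mu>
  proof (rule ccontr)
    assume "\<not> singular \<Omega> M \<rho> \<mu>"
    then obtain \<epsilon> where e: "\<epsilon> > 0" "\<And>A. A \<in> M \<Longrightarrow> \<epsilon> \<le> tv M \<rho> A + tv M \<mu> (\<Omega> - A)"
      unfolding singular_def by (auto simp: not_less)
    have mub: "\<mu> \<in> ba \<Omega> M" using mu MM by auto
    define K where "K = max 1 (ba_norm \<Omega> M \<mu>)"
    have K: "K \<ge> 1" by (simp add: K_def)
    have e0: "\<epsilon> / K \<le> rho M v m A + gn \<Omega> M \<mu> (\<Omega> - A)" if A: "A \<in> M" for A
    proof -
      have r0: "0 \<le> \<rho> A" unfolding \<rho>_def by (rule R.rho_nonneg)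
      have "\<epsilon> / K \<le> (\<rho> A + tv M \<mu> (\<Omega> - A)) / K"
        using e(2)[OF A] K R.rho_tv unfolding \<rho>_def by (simp add: divide_right_mono)
      also have "\<dots> = \<rho> A / K + gn \<Omega> M \<mu> (\<Omega> - A)" by (simp add: gn_def K_def add_divide_distrib)
      also have "\<rho> A / K \<le> \<rho> A" using r0 K by (simp add: divide_le_eq mult_le_cancel_left1)
      finally show ?thesis unfolding \<rho>_def by simp
    qed
    define m2 where "m2 = (\<lambda>A. (m A + gn \<Omega> M \<mu> A) / 2)"
    have m2A: "m2 \<in> convA \<Omega> M MM" unfolding m2_def by (rule convA_half[OF MM mA mu])
    have "s m2 \<le> s m - \<epsilon> / K" unfolding s_def
      by (rule rho_improve[OF va vb vp mp cp[OF m2A] g_range(1)[OF mub] _ e0]) (simp add: m2_def)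
    moreover have "\<epsilon> / K > 0" using e K by simp
    ultimately show False using Sle[OF m2A] sm_le by simp
  qed
  have \<rho>perp: "\<rho> \<in> perp \<Omega> M MM" unfolding perp_def using \<rho>ba sing by blast
  have \<rho>0: "\<rho> \<Omega> = 0"
  proof (rule antisym)
    show "\<rho> \<Omega> \<le> 0"
    proof (rule field_le_epsilon)
      fix e :: real assume e: "e > 0"
      obtain A where A: "A \<in> M" "tv M \<nu> A + tv M \<rho> (\<Omega> - A) < e"
        using nperp[OF \<rho>perp] e unfolding singular_def by blast
      have C: "\<Omega> - A \<in> M" using A by auto
      have U: "A \<union> (\<Omega> - A) = \<Omega>" using A sets_into_space by auto
      have "\<rho> \<Omega> = \<rho> A + \<rho> (\<Omega> - A)" unfolding \<rho>_def using addD[OF R.rho_add A(1) C] U by auto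
      moreover have "\<rho> A \<le> v A" unfolding \<rho>_def by (rule R.rho_le_v[OF A(1)])
      moreover have "tv M \<rho> (\<Omega> - A) = \<rho> (\<Omega> - A)" unfolding \<rho>_def by (rule R.rho_tv)
      ultimately show "\<rho> \<Omega> \<le> 0 + e" using A unfolding v_def by simp
    qed
    show "0 \<le> \<rho> \<Omega>" unfolding \<rho>_def by (rule R.rho_nonneg)
  qed
  have "abs_cont M \<nu> m" unfolding abs_cont_def
  proof (intro allI impI)
    fix \<epsilon> :: real assume e: "\<epsilon> > 0"
    obtain d where d: "d > 0" "\<forall>A\<in>M. m A < d \<longrightarrow> v A < \<epsilon>"
      using R.rho_zero_ac[OF \<rho>0[unfolded \<rho>_def] e] by blast
    show "\<exists>\<delta>>0. \<forall>A\<in>M. tv M m A < \<delta> \<longrightarrow> tv M \<nu> A < \<epsilon>"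
      using d convA_props(7)[OF MM mA] unfolding v_def by (intro exI[of _ d]) auto
  qed
  then show ?thesis unfolding Lset_def using nba mA by blast
qed

end

theorem mainTheorem2:
  fixes \<Omega> :: "'a set" and \<A> :: "'a set set" and M :: "('a set \<Rightarrow> real) set"
  assumes "algebra \<Omega> \<A>"
    and "M \<subseteq> ba \<Omega> \<A>"
    and "M \<noteq> {}"
  shows "Lset \<Omega> \<A> M = perp \<Omega> \<A> (perp \<Omega> \<A> M)"
proof
  interpret algebra \<Omega> \<A> by (rule assms(1))
  show "Lset \<Omega> \<A> M \<subseteq> perp \<Omega> \<A> (perp \<Omega> \<A> M)"
  proof
    fix \<nu> assume "\<nu> \<in> Lset \<Omega> \<A> M"
    then obtain m where nu: "\<nu> \<in> ba \<Omega> \<A>" and m: "m \<in> convA \<Omega> \<A> M" "abs_cont \<A> \<nu> m"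
      unfolding Lset_def by blast
    show "\<nu> \<in> perp \<Omega> \<A> (perp \<Omega> \<A> M)"
      unfolding perp_def[of \<Omega> \<A> "perp \<Omega> \<A> M"] using easy_dir[OF assms(2) nu m] nu by blast
  qed
  show "perp \<Omega> \<A> (perp \<Omega> \<A> M) \<subseteq> Lset \<Omega> \<A> M"
    using hard_dir[OF assms(2,3)] by blast
qed

end
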